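(* If $s,t\in\Sigma^n$ and there exists a symbol that appears in both $s$ and $t$, then $D(P(H(s)-H(t)))\le n-1$.
   Context: Let $k\ge 1$ be an integer, $\Sigma=\{0,1,\dots,k-1\}$, $n\ge 1$. The histogram $H(s):\Sigma\to\mathbb{Z}$ of a string $s$ gives the number of occurrences of each symbol in $s$. For $H:\Sigma\to\mathbb{Z}$, the partial sum is $P(H)(i)=\sum_{j=0}^{i}H(j)$ and the difference is $D(H)=\max_{i,j\in\Sigma}(H(i)-H(j))$. *)

theory Defs
  imports Main
begin

text \<open>Strings over the alphabet Sigma = {0,...,k-1} are lists of naturals with entries below k.\<close>

definition hist :: "nat list \<Rightarrow> nat \<Rightarrow> int" where
  "hist s a = int (count_list s a)"

definition psum :: "(nat \<Rightarrow> int) \<Rightarrow> nat \<Rightarrow> int" where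
  "psum H i = (\<Sum>j = 0..i. H j)"

definition Dif :: "nat \<Rightarrow> (nat \<Rightarrow> int) \<Rightarrow> int" where
  "Dif k H = Max {H i - H j | i j. i < k \<and> j < k}"

end

theory Submission
  imports Defs
begin

lemma sum_count: "finite A \<Longrightarrow> (\<Sum>x\<in>A. int (count_list s x)) = int (length (filter (\<lambda>x. x\<in>A) s))"
proof (induction s)
  case (Cons a s)
  have "(\<Sum>x\<in>A. int (count_list (a#s) x)) = (\<Sum>x\<in>A. int (count_list s x) + (if a = x then 1 else 0))"
    by (intro sum.cong) auto
  also have "\<dots> = (\<Sum>x\<in>A. int (count_list s x)) + (\<Sum>x\<in>A. (if a = x then 1 else 0))"
    by (simp add: sum.distrib)
  also have "(\<Sum>x\<in>A. (if a = x then 1 else 0)::int) = (if a \<in> A then 1 else 0)"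
    using Cons.prems by (simp add: sum.delta)
  finally show ?case using Cons by simp
qed simp

lemma key:
  assumes "length s = n" "a \<in> set s" "a \<in> set t"
  shows "int (length (filter (\<lambda>x. x\<in>C) s)) - int (length (filter (\<lambda>x. x\<in>C) t)) \<le> int n - 1"
proof (cases "a \<in> C")
  case True
  then have "filter (\<lambda>x. x\<in>C) t \<noteq> []" using assms(3) by (auto simp: filter_empty_conv)
  then have "length (filter (\<lambda>x. x\<in>C) t) \<ge> 1" by (cases "filter (\<lambda>x. x\<in>C) t") auto
  moreover have "length (filter (\<lambda>x. x\<in>C) s) \<le> n" using assms(1) by auto
  ultimately show ?thesis by linarith
next
  case False
  then have "length (filter (\<lambda>x. x\<in>C) s) < length s" using assms(2)
    by (intro length_filter_less) auto
  then show ?thesis using assms(1) by linarith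
qed

lemma psum_eq: "psum (\<lambda>i. hist s i - hist t i) i =
   int (length (filter (\<lambda>x. x\<in>{0..i}) s)) - int (length (filter (\<lambda>x. x\<in>{0..i}) t))"
  unfolding psum_def hist_def by (simp add: sum_subtractf sum_count)

lemma split_len: "(j::nat) \<le> i \<Longrightarrow> int (length (filter (\<lambda>x. x\<in>{0..i}) s)) =
   int (length (filter (\<lambda>x. x\<in>{0..j}) s)) + int (length (filter (\<lambda>x. x\<in>{j<..i}) s))"
proof -
  assume "j \<le> i"
  then have "{0..i} = {0..j} \<union> {j<..i}" by auto
  then have "(\<Sum>x\<in>{0..i}. int (count_list s x)) = (\<Sum>x\<in>{0..j}. int (count_list s x)) + (\<Sum>x\<in>{j<..i}. int (count_list s x))"
    by (subst sum.union_disjoint[symmetric]) auto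
  then show ?thesis by (simp add: sum_count)
qed

lemma pair_bound:
  assumes "length s = n" "length t = n" "a \<in> set s" "a \<in> set t"
  shows "psum (\<lambda>i. hist s i - hist t i) i - psum (\<lambda>i. hist s i - hist t i) j \<le> int n - 1"
proof (cases "j \<le> i")
  case True
  show ?thesis unfolding psum_eq using split_len[OF True, of s] split_len[OF True, of t]
      key[OF assms(1,3,4), of "{j<..i}"] by linarith
next
  case False
  then have ji: "i \<le> j" by simp
  show ?thesis unfolding psum_eq using split_len[OF ji, of s] split_len[OF ji, of t]
      key[OF assms(2,4,3), of "{i<..j}"] by linarith
qed

theorem lemma6:
  fixes k n :: nat and s t :: "nat list"
  assumes "k \<ge> 1" and "n \<ge> 1"
    and "length s = n" and "length t = n"
    and "set s \<subseteq> {..<k}" and "set t \<subseteq> {..<k}"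
    and "\<exists>a. a \<in> set s \<and> a \<in> set t"
  shows "Dif k (psum (\<lambda>i. hist s i - hist t i)) \<le> int n - 1"
proof -
  obtain a where a: "a \<in> set s" "a \<in> set t" using assms(7) by blast
  let ?P = "psum (\<lambda>i. hist s i - hist t i)"
  have eq: "{?P i - ?P j | i j. i < k \<and> j < k} = (\<lambda>(i,j). ?P i - ?P j) ` ({..<k} \<times> {..<k})"
    by auto
  have fin: "finite {?P i - ?P j | i j. i < k \<and> j < k}" unfolding eq by simp
  have ne: "{?P i - ?P j | i j. i < k \<and> j < k} \<noteq> {}" using assms(1) by force
  show ?thesis unfolding Dif_def
    using pair_bound[OF assms(3,4) a] by (subst Max_le_iff[OF fin ne]) auto
qed

end
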